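(* Let $m\ge 2$, let $\bar l(x)=\sum_{v=0}^{m} b_v x^v$ be a primitive polynomial of degree $m$ over $\mathbb{F}_2$, and let $l(x)=\sum_{v=0}^m b_v x^{2^v}$. Then exactly one of $c_0=\sum_{j\ge0} b_{2j}$ and $c_1=\sum_{j\ge 0} b_{2j+1}$ (with $b_u=0$ for $u>m$) is zero, and the polynomial $$\frac{l(x)^2+l(x)+1}{x^2+x+1}$$ is an irreducible polynomial of degree $2(2^m-1)$ over $\mathbb{F}_2$.
   Context: A primitive polynomial of degree $m$ over $\mathbb{F}_2$ is a monic irreducible polynomial of degree $m$ whose roots generate $\mathbb{F}_{2^m}^*$. *)

theory Defs
  imports "HOL-Library.Z2" "HOL-Computational_Algebra.Polynomial" "HOL-Computational_Algebra.Polynomial_Factorial"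
begin

text \<open>A primitive polynomial of degree m over F_2: monic,
irreducible, of degree m, and a root (the class of x in F_2[x]/(p)) has
multiplicative order exactly 2^m - 1, i.e. it generates F_(2^m)^*.\<close>

definition primitive_poly :: "nat \<Rightarrow> bit poly \<Rightarrow> bool" where
  "primitive_poly m p \<longleftrightarrow>
     degree p = m \<and> lead_coeff p = 1 \<and> irreducible p \<and>
     p dvd ([:0,1:] ^ (2^m - 1) - 1) \<and>
     (\<forall>k. 0 < k \<and> k < 2^m - 1 \<longrightarrow> \<not> p dvd ([:0,1:] ^ k - 1))"

definition linearized :: "bit poly \<Rightarrow> bit poly" where
  "linearized p = (\<Sum>v\<le>degree p. monom (coeff p v) (2^v))"

end

theory Submission
  imports Defs "Berlekamp_Zassenhaus.Distinct_Degree_Factorization"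
begin

hide_const (open) comm_semiring_1_class.primitive_poly
hide_const (open) module.smult


lemma bit_cases': "(x::bit) = 0 \<or> x = 1"
  by (cases x) auto

lemma bitp_add_self[simp]: "(p::bit poly) + p = 0"
proof -
  have "\<And>x::bit. x + x = 0" using bit_cases' by auto
  thus ?thesis by (intro poly_eqI) (simp only: coeff_add coeff_0)
qed

lemma bitp_two[simp]: "(2::bit poly) = 0"
  by (metis one_add_one bitp_add_self)

lemma bitp_uminus[simp]: "- (p::bit poly) = p"
  by (simp add: poly_eq_iff)

lemma bitp_minus: "(p::bit poly) - q = p + q"
  by (metis bitp_uminus diff_conv_add_uminus)

lemma bitp_sq_add: "((a::bit poly) + b)^2 = a^2 + b^2"
proof -
  have "(a+b)^2 = a^2 + b^2 + (a*b + a*b)" by (simp add: power2_eq_square algebra_simps)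
  thus ?thesis by simp
qed

lemma bitp_sq_sum: "finite S \<Longrightarrow> (\<Sum>i\<in>S. (f i :: bit poly))^2 = (\<Sum>i\<in>S. (f i)^2)"
  by (induct S rule: finite_induct) (auto simp: bitp_sq_add)

lemma monom_sq_bit: "(monom (c::bit) n)^2 = monom c (2*n)"
  using bit_cases'[of c] by (auto simp: monom_power mult.commute)

lemma lin_alt: assumes "degree a < n"
  shows "linearized a = (\<Sum>v<n. monom (coeff a v) (2^v))"
  unfolding linearized_def
proof (rule sum.mono_neutral_left)
  show "finite {..<n}" by simp
  show "{..degree a} \<subseteq> {..<n}"
  proof
    fix i assume "i \<in> {..degree a}"
    thus "i \<in> {..<n}" using assms by simp
  qed
  show "\<forall>i\<in>{..<n} - {..degree a}. monom (coeff a i) (2 ^ i) = 0"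
  proof
    fix i assume "i \<in> {..<n} - {..degree a}"
    hence "degree a < i" by simp
    thus "monom (coeff a i) (2 ^ i) = 0" by (simp add: coeff_eq_0)
  qed
qed

lemma lin_add: "linearized (a + b) = linearized a + linearized b"
proof -
  define n where "n = Suc (max (degree a) (degree b))"
  have "degree (a+b) < n" using degree_add_le_max[of a b] unfolding n_def by linarith
  hence "linearized (a+b) = (\<Sum>v<n. monom (coeff (a+b) v) (2^v))" by (rule lin_alt)
  also have "\<dots> = (\<Sum>v<n. monom (coeff a v) (2^v) + monom (coeff b v) (2^v))"
    by (simp only: coeff_add add_monom)
  also have "\<dots> = (\<Sum>v<n. monom (coeff a v) (2^v)) + (\<Sum>v<n. monom (coeff b v) (2^v))"
    by (rule sum.distrib)
  also have "\<dots> = linearized a + linearized b"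
  proof -
    have "degree a < n" "degree b < n" unfolding n_def by auto
    thus ?thesis by (simp only: lin_alt)
  qed
  finally show ?thesis .
qed

lemma lin_minus: "linearized (a - b) = linearized a - linearized b"
  by (simp add: bitp_minus lin_add)

lemma lin_0[simp]: "linearized 0 = 0"
  by (simp add: linearized_def)

lemma lin_X: "linearized ([:0,1:] * a) = (linearized a)^2"
proof -
  let ?n = "Suc (degree a)"
  have e: "[:0,1:] * a = pCons 0 a" by simp
  have d: "degree (pCons 0 a) < Suc ?n"
    by (metis degree_pCons_le le_imp_less_Suc)
  have "linearized (pCons 0 a) = (\<Sum>v<Suc ?n. monom (coeff (pCons 0 a) v) (2^v))"
    by (rule lin_alt[OF d])
  also have "\<dots> = (\<Sum>v<?n. monom (coeff a v) (2^(Suc v)))"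
    by (simp add: sum.lessThan_Suc_shift del: sum.lessThan_Suc)
  also have "\<dots> = (\<Sum>v<?n. (monom (coeff a v) (2^v))^2)"
    by (simp add: monom_sq_bit)
  also have "\<dots> = (\<Sum>v<?n. monom (coeff a v) (2^v))^2"
    by (simp add: bitp_sq_sum del: sum.lessThan_Suc)
  also have "\<dots> = (linearized a)^2" by (simp add: lin_alt[of a ?n])
  finally show ?thesis using e by simp
qed

lemma lin_pCons0: "linearized (pCons 0 a) = (linearized a)^2"
  using lin_X[of a] by simp

lemma lin_smult: "linearized (smult c a) = smult c (linearized a)"
  using bit_cases'[of c] by auto

lemma lin_mult_closed: assumes "p dvd linearized b" shows "p dvd linearized (a * b)"
proof (induct a rule: pCons_induct)
  case 0 then show ?case by simp
next
  case (pCons c a)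
  have "pCons c a * b = smult c b + [:0,1:] * (a * b)" by simp
  hence "linearized (pCons c a * b) = smult c (linearized b) + (linearized (a*b))^2"
    by (simp add: lin_add lin_pCons0 lin_smult)
  thus ?case using pCons assms by (auto intro!: dvd_add dvd_smult simp: power2_eq_square)
qed

lemma lin_mult_closed': assumes "p dvd linearized a" shows "p dvd linearized (a * b)"
  using lin_mult_closed[OF assms, of b] by (simp add: mult.commute)

lemma lin_monom: "linearized (monom 1 k) = monom 1 (2^k)"
proof -
  have "linearized (monom 1 k) = (\<Sum>v<Suc k. monom (coeff (monom 1 k) v) (2^v))"
    by (rule lin_alt) (simp add: degree_monom_eq)
  also have "\<dots> = (\<Sum>v<Suc k. if v = k then monom 1 (2^v) else 0)"
    by (intro sum.cong) (auto simp: coeff_monom)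
  also have "\<dots> = monom 1 (2^k)" by (simp add: sum.delta')
  finally show ?thesis .
qed

lemma X_pow: "([:0,1:]::'a::comm_ring_1 poly)^k = monom 1 k"
  by (simp add: monom_altdef)

lemma lin_Xpow: "linearized ([:0,1:]^k) = [:0,1:]^(2^k)"
  by (simp only: X_pow lin_monom)

lemma lin_1: "linearized 1 = [:0,1:]"
  using lin_Xpow[of 0] by simp



definition b2m :: "bit \<Rightarrow> bool mod_ring" where "b2m x = (if x = 0 then 0 else 1)"
definition m2b :: "bool mod_ring \<Rightarrow> bit" where "m2b x = (if x = 0 then 0 else 1)"

lemma mr_cases: "(x::bool mod_ring) = 0 \<or> x = 1"
  by transfer auto
lemma mr_11: "(1::bool mod_ring) + 1 = 0"
  by transfer simp
interpretation b2m: idom_hom b2m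
  apply unfold_locales
  using bit_cases' mr_11 by (auto simp: b2m_def)

interpretation m2b: idom_hom m2b
  apply unfold_locales
  subgoal by (simp add: m2b_def)
  subgoal for x y using mr_cases[of x] mr_cases[of y] mr_11 by (auto simp: m2b_def)
  subgoal by (simp add: m2b_def)
  subgoal for x y using mr_cases[of x] mr_cases[of y] by (auto simp: m2b_def)
  done

lemma m2b_b2m[simp]: "m2b (b2m x) = x"
  using bit_cases'[of x] by (auto simp: m2b_def b2m_def)
lemma b2m_m2b[simp]: "b2m (m2b x) = x"
  using mr_cases[of x] by (auto simp: m2b_def b2m_def)

interpretation pb2m: map_poly_idom_hom b2m ..
interpretation pm2b: map_poly_idom_hom m2b ..

lemma map_map_b[simp]: "map_poly m2b (map_poly b2m p) = p"
  by (simp add: map_poly_map_poly o_def)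
lemma map_map_m[simp]: "map_poly b2m (map_poly m2b p) = p"
  by (simp add: map_poly_map_poly o_def)

lemma unit_m2b: "is_unit (map_poly m2b a) \<Longrightarrow> is_unit a"
proof -
  assume "is_unit (map_poly m2b a)"
  then obtain c where "1 = map_poly m2b a * c" by (rule dvdE)
  hence "map_poly b2m 1 = map_poly b2m (map_poly m2b a * c)" by simp
  hence "1 = a * map_poly b2m c" by (simp add: pb2m.hom_mult)
  thus ?thesis by (rule dvdI)
qed
lemma unit_b2m: "is_unit (map_poly b2m a) \<Longrightarrow> is_unit a"
proof -
  assume "is_unit (map_poly b2m a)"
  then obtain c where "1 = map_poly b2m a * c" by (rule dvdE)
  hence "map_poly m2b 1 = map_poly m2b (map_poly b2m a * c)" by simp
  hence "1 = a * map_poly m2b c" by (simp add: pm2b.hom_mult)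
  thus ?thesis by (rule dvdI)
qed

lemma irr_b2m: assumes "irreducible (p::bit poly)" shows "irreducible (map_poly b2m p)"
proof (rule irreducibleI)
  show "map_poly b2m p \<noteq> 0" using assms by (metis irreducible_def map_map_b map_poly_0)
  show "\<not> is_unit (map_poly b2m p)" using assms unit_b2m unfolding irreducible_def by blast
  fix a b assume "map_poly b2m p = a * b"
  hence "map_poly m2b (map_poly b2m p) = map_poly m2b (a*b)" by simp
  hence "p = map_poly m2b a * map_poly m2b b" by (simp add: pm2b.hom_mult)
  hence "is_unit (map_poly m2b a) \<or> is_unit (map_poly m2b b)" using assms unfolding irreducible_def by blast
  thus "is_unit a \<or> is_unit b" using unit_m2b by blast
qed

lemma irr_frob: assumes "irreducible (p::bit poly)"
  shows "p dvd [:0,1:]^(2^degree p) - [:0,1:]"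
proof -
  have dd: "degree (map_poly b2m p) = degree p"
    using degree_map_poly_le[of b2m p] degree_map_poly_le[of m2b "map_poly b2m p"] by simp
  have "map_poly b2m p dvd (monom 1 1)^(CARD(bool)^degree p) - monom 1 1"
    by (rule degree_divisor1[OF irr_b2m[OF assms] dd])
  hence "map_poly b2m p dvd (monom 1 1)^(2^degree p) - monom 1 1" by simp
  then obtain c where c: "(monom 1 1)^(2^degree p) - monom 1 1 = map_poly b2m p * c" by (rule dvdE)
  hence "map_poly m2b ((monom 1 1)^(2^degree p) - monom 1 1) = map_poly m2b (map_poly b2m p * c)" by simp
  hence "(monom 1 1)^(2^degree p) - monom 1 1 = p * map_poly m2b c"
    by (simp add: pm2b.hom_mult pm2b.hom_minus pm2b.hom_power)
  hence "p dvd (monom 1 1)^(2^degree p) - monom 1 1" by (rule dvdI)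
  thus ?thesis unfolding x_as_monom .
qed


lemma H1: "[:-1,1:] = ([:0,1:]::bit poly) + 1"
  by (simp add: poly_eq_iff coeff_pCons split: nat.split)

lemma H2: "[:1,1,1:] = ([:0,1:]::bit poly)^2 + [:0,1:] + 1"
  by (simp add: poly_eq_iff coeff_pCons power2_eq_square split: nat.split)

lemma H3: "[:0,1,1:] = ([:0,1:]::bit poly)^2 + [:0,1:]"
  by (simp add: poly_eq_iff coeff_pCons power2_eq_square split: nat.split)

lemma H4: "([:0,1:]::bit poly)^2 + 1 = [:1,0,1:]"
  by (simp add: poly_eq_iff coeff_pCons power2_eq_square split: nat.split)

lemma irr_m2b: assumes "irreducible (p::bool mod_ring poly)" shows "irreducible (map_poly m2b p)"
proof (rule irreducibleI)
  show "map_poly m2b p \<noteq> 0" using assms by (metis irreducible_def map_map_m map_poly_0)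
  show "\<not> is_unit (map_poly m2b p)" using assms unit_m2b unfolding irreducible_def by blast
  fix a b assume "map_poly m2b p = a * b"
  hence "map_poly b2m (map_poly m2b p) = map_poly b2m (a*b)" by simp
  hence "p = map_poly b2m a * map_poly b2m b" by (simp add: pb2m.hom_mult)
  hence "is_unit (map_poly b2m a) \<or> is_unit (map_poly b2m b)" using assms unfolding irreducible_def by blast
  thus "is_unit a \<or> is_unit b" using unit_b2m by blast
qed

lemma bezout_irr: assumes irr: "irreducible (a::bit poly)" and nd: "\<not> a dvd b"
  shows "\<exists>s t. s * a + t * b = 1"
proof -
  define a' where "a' = map_poly b2m a"
  define b' where "b' = map_poly b2m b"
  have pa: "prime_elem a'" unfolding a'_def by (rule field_poly_irreducible_imp_prime[OF irr_b2m[OF irr]])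
  have nd': "\<not> a' dvd b'"
  proof
    assume "a' dvd b'"
    then obtain c where "b' = a' * c" by (rule dvdE)
    hence "map_poly m2b b' = map_poly m2b (a' * c)" by simp
    hence "b = a * map_poly m2b c" unfolding a'_def b'_def by (simp add: pm2b.hom_mult)
    thus False using nd by (metis dvd_triv_left)
  qed
  have "gcd a' b' = 1" using prime_elem_imp_coprime[OF pa nd'] by (metis coprime_iff_gcd_eq_1)
  hence e: "fst (bezout_coefficients a' b') * a' + snd (bezout_coefficients a' b') * b' = 1"
    by (metis bezout_coefficients_fst_snd)
  define s where "s = map_poly m2b (fst (bezout_coefficients a' b'))"
  define t where "t = map_poly m2b (snd (bezout_coefficients a' b'))"
  have "map_poly m2b (fst (bezout_coefficients a' b') * a' + snd (bezout_coefficients a' b') * b') = map_poly m2b 1"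
    using e by simp
  hence "s * a + t * b = 1" unfolding s_def t_def a'_def b'_def
    by (simp add: pm2b.hom_mult pm2b.hom_add)
  thus ?thesis by blast
qed

lemma exists_irr_factor: assumes "(G::bit poly) \<noteq> 0" "\<not> is_unit G"
  shows "\<exists>p. p dvd G \<and> irreducible p"
proof -
  define G' where "G' = map_poly b2m G"
  have "G' \<noteq> 0" unfolding G'_def using assms(1) by (metis map_map_b map_poly_0)
  moreover have "\<not> is_unit G'" unfolding G'_def using assms(2) unit_b2m by blast
  ultimately obtain p' where pd: "p' dvd G'" and pp: "prime p'" using prime_divisor_exists by blast
  have "irreducible p'" using pp by (blast intro: prime_elem_imp_irreducible prime_imp_prime_elem)
  hence irrp: "irreducible (map_poly m2b p')" by (rule irr_m2b)
  obtain c where "G' = p' * c" using pd by (rule dvdE)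
  hence "map_poly m2b G' = map_poly m2b (p' * c)" by simp
  hence "G = map_poly m2b p' * map_poly m2b c" unfolding G'_def by (simp add: pm2b.hom_mult)
  hence "map_poly m2b p' dvd G" by (metis dvd_triv_left)
  thus ?thesis using irrp by blast
qed

lemma of_nat_bit: "(of_nat k :: bit) = (if odd k then 1 else 0)"
  by (induct k) auto

lemma root1_split: assumes "poly (a::bit poly) 1 = 1" shows "\<exists>r. a = ([:0,1:] + 1) * r + 1"
proof -
  have "poly (a - 1) 1 = 0" using assms by simp
  hence "[:-1,1:] dvd a - 1" by (rule poly_eq_0_iff_dvd[THEN iffD1])
  hence "([:0,1:]::bit poly) + 1 dvd a - 1" by (simp only: H1)
  then obtain r where "a - 1 = ([:0,1:] + 1) * r" by (rule dvdE)
  hence "a = ([:0,1:] + 1) * r + 1" by (simp add: algebra_simps)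
  thus ?thesis by blast
qed

lemma key:
  fixes lbar p :: "bit poly" and m N k :: nat
  assumes irr: "irreducible lbar" and dm: "degree lbar = m" and m2: "m \<ge> 2"
    and primdvd: "\<And>k. lbar dvd [:0,1:]^k - 1 \<longleftrightarrow> N dvd k"
    and Nodd: "odd N"
    and b1: "poly lbar 1 = 1"
    and pirr: "irreducible p"
    and pf: "p dvd (linearized lbar)^2 + linearized lbar + 1"
    and pQ: "\<not> p dvd [:1,1,1:]"
    and Ak: "p dvd linearized ([:0,1:]^k - 1)"
  shows "2 * N dvd k"
proof -
  define X :: "bit poly" where "X = [:0,1:]"
  define Y where "Y = X + 1"
  define l where "l = linearized lbar"
  define A where "A = (\<lambda>a. p dvd linearized a)"
  have A_add: "A a \<Longrightarrow> A b \<Longrightarrow> A (a + b)" for a b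
    unfolding A_def by (simp add: lin_add)
  have A_mult: "A b \<Longrightarrow> A (a * b)" for a b
    unfolding A_def by (rule lin_mult_closed)
  have A_mult': "A a \<Longrightarrow> A (a * b)" for a b
    unfolding A_def by (rule lin_mult_closed')
  have linX: "linearized (X * a) = (linearized a)^2" for a
    unfolding X_def by (rule lin_X)
  have linY: "linearized Y = X^2 + X"
    using linX[of 1] by (simp add: Y_def lin_add lin_1 X_def)
  have linYl: "linearized (Y * lbar) = l^2 + l"
    by (simp add: Y_def distrib_right lin_add linX l_def)
  have F1: "A (Y^2 * lbar)"
  proof -
    have "Y^2 * lbar = X*(X*lbar) + lbar + 2*(X*lbar)"
      by (simp add: Y_def power2_eq_square algebra_simps)
    hence e1: "Y^2 * lbar = X*(X*lbar) + lbar" by simp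
    have "(l^2+l)*(l^2+l+1) = (l^2)^2 + l + 2*(l^2*l+l^2)"
      by (simp add: power2_eq_square algebra_simps)
    hence e2: "(l^2)^2 + l = (l^2+l)*(l^2+l+1)" by simp
    have "linearized (Y^2 * lbar) = (l^2)^2 + l"
      unfolding e1 by (simp add: lin_add linX l_def)
    thus ?thesis unfolding A_def e2 using pf l_def by simp
  qed
  have F2: "\<not> A (Y * lbar)"
  proof
    assume "A (Y * lbar)"
    hence "p dvd l^2 + l" unfolding A_def linYl .
    moreover have "p dvd l^2 + l + 1" using pf l_def by simp
    ultimately have "p dvd 1" by (simp add: dvd_add_right_iff)
    thus False using pirr by (simp add: irreducible_def)
  qed
  obtain q where q: "lbar = Y * q + 1"
    using root1_split[OF b1] unfolding Y_def X_def by blast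
  have Ak': "A (X^k - 1)" using Ak unfolding A_def X_def .
  have primeL: "prime_elem lbar" by (rule field_poly_irreducible_imp_prime[OF irr])
  have Ndvd: "N dvd k"
  proof (rule ccontr)
    assume "\<not> N dvd k"
    hence "\<not> lbar dvd X^k - 1" using primdvd unfolding X_def by simp
    then obtain s t where st: "s * lbar + t * (X^k - 1) = 1" using bezout_irr[OF irr] by blast
    have "Y^2 = s * (Y^2 * lbar) + (t*Y^2) * (X^k - 1)"
    proof -
      have "Y^2 = Y^2 * (s * lbar + t * (X^k - 1))" using st by simp
      thus ?thesis by (simp add: algebra_simps)
    qed
    hence AY2: "A (Y^2)" using F1 Ak' A_add A_mult A_mult' by metis
    have eY: "Y * lbar = Y^2 * q + Y" unfolding q by (simp add: power2_eq_square algebra_simps)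
    have AYq: "A (Y^2 * q)" using AY2 A_mult' by blast
    have "l^2 + l = linearized (Y^2*q) + (X^2 + X)"
      using linYl eY by (simp add: lin_add linY)
    hence eq: "(l^2 + l + 1) - linearized (Y^2*q) = X^2 + X + 1"
      by (simp only: add.assoc add_diff_cancel_left')
    hence "[:1,1,1:] = (l^2 + l + 1) - linearized (Y^2*q)"
      by (simp only: eq H2 X_def)
    moreover have "p dvd (l^2 + l + 1) - linearized (Y^2*q)"
      using pf AYq unfolding A_def l_def by (simp add: dvd_diff)
    ultimately show False using pQ by simp
  qed
  have keven: "even k"
  proof (rule ccontr)
    assume odd: "odd k"
    have "lbar dvd X^k - 1" using primdvd Ndvd unfolding X_def by simp
    moreover have "X^k - 1 = (X - 1) * (\<Sum>i<k. X^i)" by (rule power_diff_1_eq)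
    ultimately have dprod: "lbar dvd (X - 1) * (\<Sum>i<k. X^i)" by simp
    have ndv: "\<not> lbar dvd X - 1"
    proof
      assume "lbar dvd X - 1"
      moreover have "X - 1 = [:-1,1:]" by (simp only: X_def bitp_minus H1)
      hence "X - 1 \<noteq> 0" "degree (X - 1) = 1" by simp_all
      ultimately have "degree lbar \<le> 1" by (metis dvd_imp_degree_le)
      thus False using dm m2 by simp
    qed
    have "lbar dvd (\<Sum>i<k. X^i)" using prime_elem_dvd_multD[OF primeL dprod] ndv by blast
    then obtain t where t: "(\<Sum>i<k. X^i) = lbar * t" by (rule dvdE)
    have "poly (\<Sum>i<k. X^i) 1 = of_nat k" by (simp add: poly_sum X_def)
    hence "poly t 1 = 1" using t b1 odd of_nat_bit[of k] by simp
    then obtain r where r: "t = Y * r + 1"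
      using root1_split unfolding Y_def X_def by blast
    have "X^k - 1 = Y^2 * lbar * r + Y * lbar"
    proof -
      have "X - 1 = Y" unfolding Y_def by (simp add: bitp_minus)
      hence "X^k - 1 = Y * (lbar * (Y * r + 1))"
        using \<open>X^k - 1 = (X - 1) * (\<Sum>i<k. X^i)\<close> t r by simp
      thus ?thesis by (simp add: power2_eq_square algebra_simps)
    qed
    hence "Y * lbar = (X^k - 1) + Y^2 * lbar * r"
      by (metis bitp_minus add_diff_cancel_left')
    hence "A (Y * lbar)" using Ak' F1 A_add A_mult' by metis
    thus False using F2 by simp
  qed
  from Ndvd obtain j where j: "k = N * j" by blast
  with keven Nodd have "even j" by simp
  then obtain i where "j = 2*i" by blast
  hence "k = (2 * N) * i" using j by simp
  thus ?thesis by simp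
qed


lemma sum_even_odd_split: "(\<Sum>i<2*(n::nat). (f i :: 'a::comm_monoid_add)) = (\<Sum>i<n. f (2*i)) + (\<Sum>i<n. f (2*i+1))"
  by (induct n) (simp_all add: add_ac)

lemma irr_no_root:
  fixes p :: "'a::field poly"
  assumes "irreducible p" "degree p \<ge> 2" shows "poly p c \<noteq> 0"
proof
  assume "poly p c = 0"
  hence "[:-c,1:] dvd p" by (rule poly_eq_0_iff_dvd[THEN iffD1])
  then obtain q where q: "p = [:-c,1:] * q" by (rule dvdE)
  hence "is_unit [:-c,1:] \<or> is_unit q" using assms(1) unfolding irreducible_def by blast
  moreover have "\<not> is_unit [:-c,1:]" by (simp add: is_unit_iff_degree)
  moreover have "q \<noteq> 0" using q assms by auto
  ultimately have "degree q = 0" by (simp add: is_unit_iff_degree)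
  moreover have "degree p = degree [:-c,1:] + degree q"
    using q \<open>q \<noteq> 0\<close> degree_mult_eq[of "[:-c,1:]" q] by simp
  ultimately have "degree p = 1" by simp
  thus False using assms by simp
qed

lemma pderiv_lin: "pderiv (linearized a) = [:coeff a 0:]"
proof -
  obtain c a' where a: "a = pCons c a'" by (cases a) auto
  have e: "a = smult c 1 + pCons 0 a'" unfolding a by simp
  have "linearized a = smult c [:0,1:] + (linearized a')^2"
    by (subst e, simp only: lin_add lin_smult lin_1 lin_pCons0)
  thus ?thesis using a by (simp add: pderiv_power pderiv_smult pderiv_pCons pderiv_add)
qed

theorem mainTheorem9:
  fixes m :: nat and lbar :: "bit poly"
  assumes "m \<ge> 2"
    and "primitive_poly m lbar"
  defines "l \<equiv> linearized lbar"
    and "c0 \<equiv> (\<Sum>j\<le>m. coeff lbar (2*j))"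
    and "c1 \<equiv> (\<Sum>j\<le>m. coeff lbar (2*j+1))"
  shows "(c0 = 0 \<longleftrightarrow> c1 \<noteq> 0)
     \<and> [:1,1,1:] dvd (l^2 + l + 1)
     \<and> irreducible ((l^2 + l + 1) div [:1,1,1:])
     \<and> degree ((l^2 + l + 1) div [:1,1,1:]) = 2 * (2^m - 1)"
proof -
  define X :: "bit poly" where "X = [:0,1:]"
  define N :: nat where "N = 2^m - 1"
  define Q :: "bit poly" where "Q = [:1,1,1:]"
  define f where "f = l^2 + l + 1"
  have m2: "m \<ge> 2" by fact
  from assms(2) have deg: "degree lbar = m" and lc: "lead_coeff lbar = 1"
    and irr: "irreducible lbar" and p1: "lbar dvd X^N - 1"
    and p2: "\<And>k. 0 < k \<Longrightarrow> k < N \<Longrightarrow> \<not> lbar dvd X^k - 1"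
    unfolding Defs.primitive_poly_def X_def N_def by auto
  have pow4: "(2::nat)^m \<ge> 4"
    using power_increasing[OF m2, of "2::nat"] by simp
  hence N3: "N \<ge> 3" unfolding N_def by simp
  have Nodd: "odd N"
  proof -
    have "(2::nat)^m = 2 * 2^(m-1)" using m2 by (metis Suc_diff_le diff_Suc_1 le_trans one_le_numeral power_Suc)
    thus ?thesis unfolding N_def using pow4 by presburger
  qed
  have dvd_pow: "X^N - 1 dvd X^(N*j) - 1" for j
  proof -
    have "(X^N)^j - 1 = (X^N - 1) * (\<Sum>i<j. (X^N)^i)" by (rule power_diff_1_eq)
    thus ?thesis by (simp add: power_mult)
  qed
  have primdvd: "lbar dvd X^k - 1 \<longleftrightarrow> N dvd k" for k
  proof
    assume "N dvd k"
    then obtain j where "k = N * j" by blast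
    thus "lbar dvd X^k - 1" using p1 dvd_pow dvd_trans by blast
  next
    assume a: "lbar dvd X^k - 1"
    define r where "r = k mod N"
    define j where "j = k div N"
    have "X^k - 1 = X^r * (X^(N*j) - 1) + (X^r - 1)"
    proof -
      have "k = r + N * j" unfolding r_def j_def by simp
      hence "X^k = X^r * X^(N*j)" by (simp add: power_add)
      thus ?thesis by (simp add: algebra_simps)
    qed
    moreover have "lbar dvd X^r * (X^(N*j) - 1)"
      using p1 dvd_pow dvd_trans dvd_mult by blast
    ultimately have "lbar dvd X^r - 1" using a by (metis dvd_add_right_iff)
    moreover have "r < N" unfolding r_def using N3 by simp
    ultimately have "r = 0" using p2 by blast
    thus "N dvd k" unfolding r_def by (simp add: dvd_eq_mod_eq_0)
  qed
  have b1: "poly lbar 1 = 1"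
    using irr_no_root[OF irr, of 1] deg m2 bit_cases' by auto
  have b0: "coeff lbar 0 = 1"
    using irr_no_root[OF irr, of 0] deg m2 bit_cases' by (auto simp: poly_0_coeff_0)
  have partA: "c0 = 0 \<longleftrightarrow> c1 \<noteq> 0"
  proof -
    have "c0 + c1 = (\<Sum>i<2 * Suc m. coeff lbar i)"
      unfolding c0_def c1_def lessThan_Suc_atMost[symmetric] by (rule sum_even_odd_split[symmetric])
    also have "\<dots> = (\<Sum>i\<le>m. coeff lbar i)"
    proof (rule sum.mono_neutral_right)
      show "\<forall>i\<in>{..<2 * Suc m} - {..m}. coeff lbar i = 0" using deg by (auto simp: coeff_eq_0)
    qed auto
    also have "\<dots> = poly lbar 1" by (simp only: poly_altdef deg power_one mult_1_right)
    finally have "c0 + c1 = 1" using b1 by simp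
    thus ?thesis using bit_cases'[of c0] bit_cases'[of c1] by auto
  qed
  have ldeg: "degree l = 2^m"
  proof -
    have e: "{..m} = insert m {..<m}" by auto
    have "l = (\<Sum>v<m. monom (coeff lbar v) (2^v)) + monom 1 (2^m)"
      unfolding l_def linearized_def deg e using lc deg
      by (simp add: add.commute)
    moreover have "degree (\<Sum>v<m. monom (coeff lbar v) (2^v)) < 2^m"
    proof (rule degree_sum_less)
      fix v assume "v \<in> {..<m}"
      hence "(2::nat)^v < 2^m" by simp
      thus "degree (monom (coeff lbar v) (2^v)) < 2^m" using degree_monom_le le_less_trans by blast
    qed simp
    ultimately show ?thesis by (simp add: degree_add_eq_right degree_monom_eq)
  qed
  have l0: "l \<noteq> 0" using ldeg by auto
  have fdeg: "degree f = 2 * 2^m"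
  proof -
    have d2: "degree (l^2) = 2 * 2^m" using l0 ldeg by (simp add: degree_power_eq)
    have "degree (l^2 + l) = 2 * 2^m" using d2 ldeg by (simp add: degree_add_eq_left)
    thus ?thesis unfolding f_def using d2 by (simp add: degree_add_eq_left)
  qed
  have QX: "Q = X^2 + X + 1" unfolding Q_def X_def by (rule H2)
  have partB: "Q dvd f"
  proof -
    define q where "q = lbar div (X^2+1)"
    define r where "r = lbar mod (X^2+1)"
    have lq: "lbar = (X^2+1) * q + r" unfolding q_def r_def by (metis div_mult_mod_eq mult.commute)
    have X21: "X^2 + 1 \<noteq> 0" "degree (X^2 + 1) = 2" unfolding X_def H4 by simp_all
    have rc: "coeff r n = 0" if "n \<ge> 2" for n
    proof (cases "r = 0")
      case False
      hence "degree r < 2" using degree_mod_less'[OF X21(1)] X21(2) unfolding r_def by metis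
      thus ?thesis using that by (simp add: coeff_eq_0)
    qed simp
    define r0 where "r0 = coeff r 0"
    define r1 where "r1 = coeff r 1"
    have rr: "r = [:r0, r1:]"
    proof (rule poly_eqI)
      fix n show "coeff r n = coeff [:r0, r1:] n"
        using rc unfolding r0_def r1_def
        by (cases n; cases "n - 1") (auto simp: coeff_pCons)
    qed
    have "poly lbar 1 = poly r 1"
      unfolding lq by (simp add: X_def power2_eq_square)
    hence r01: "r0 + r1 = 1" using b1 rr by simp
    define w where "w = linearized r"
    have wv: "w = smult r0 X + smult r1 (X^2)"
    proof -
      have e2: "r = smult r0 1 + X * smult r1 1" unfolding rr X_def by simp
      have linX: "linearized (X * a) = (linearized a)^2" for a
        unfolding X_def by (rule lin_X)
      have l1: "linearized 1 = X" by (simp only: lin_1 X_def)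
      have "w = smult r0 (linearized 1) + (smult r1 (linearized 1))^2"
        unfolding w_def by (subst e2, simp only: lin_add lin_smult linX)
      moreover have "(smult r1 X)^2 = smult r1 (X^2)"
        using bit_cases'[of r1] by auto
      ultimately show ?thesis by (simp only: l1)
    qed
    have "[:0,1,1:] * Q = X^(2^2) + X"
    proof -
      have "[:0,1,1:] * Q = (X^2 + X) * (X^2 + X + 1)" unfolding QX X_def H3 by (rule refl)
      also have "\<dots> = X^(2^2) + X + 2 * (X^3 + X^2)"
        by (simp add: algebra_simps eval_nat_numeral)
      finally show ?thesis by simp
    qed
    moreover have "linearized (X^2 + 1) = X^(2^2) + X"
      by (simp only: X_def lin_add lin_Xpow lin_1)
    ultimately have "Q dvd linearized (X^2 + 1)" by (metis dvd_triv_right)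
    hence Qq: "Q dvd linearized ((X^2+1) * q)" by (rule lin_mult_closed')
    have "l = linearized ((X^2+1) * q) + w" unfolding l_def w_def
      by (subst lq) (simp add: lin_add)
    hence Qlw: "Q dvd l - w" using Qq by simp
    have "f - (w^2 + w + 1) = (l - w) * (l + w + 1)"
      unfolding f_def by (simp add: power2_eq_square algebra_simps)
    hence Q1: "Q dvd f - (w^2 + w + 1)" using Qlw by simp
    have Q2: "Q dvd w^2 + w + 1"
    proof (cases "r0 = 0")
      case True
      hence "r1 = 1" using r01 by simp
      hence "w = X^2" using wv True by simp
      moreover have "Q * Q = (X^2)^2 + X^2 + 1"
      proof -
        have "Q * Q = (X^2)^2 + X^2 + 1 + 2 * (X^3 + X^2 + X)" unfolding QX
          by (simp add: algebra_simps eval_nat_numeral)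
        thus ?thesis by simp
      qed
      ultimately show ?thesis by (metis dvd_triv_left)
    next
      case False
      hence "r0 = 1" using bit_cases' by blast
      hence "r1 = 0" using r01 by simp
      hence "w = X" using wv \<open>r0 = 1\<close> by simp
      thus ?thesis using QX by (simp add: power2_eq_square)
    qed
    show ?thesis using Q1 Q2 by (metis diff_add_cancel dvd_add)
  qed
  define G where "G = f div Q"
  have fQG: "f = Q * G" unfolding G_def using partB by (metis dvd_mult_div_cancel)
  have f0: "f \<noteq> 0" using fdeg by auto
  have G0: "G \<noteq> 0" using fQG f0 by auto
  have Gdeg: "degree G = 2 * N"
  proof -
    have Q0: "Q \<noteq> 0" and dQ: "degree Q = 2" unfolding Q_def by simp_all
    have "degree f = degree Q + degree G" unfolding fQG using Q0 G0 by (rule degree_mult_eq)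
    hence "2 * 2^m = 2 + degree G" using fdeg dQ by simp
    thus ?thesis unfolding N_def by (simp add: diff_mult_distrib2)
  qed
  have pderf: "pderiv f = 1"
  proof -
    have "pderiv l = 1" unfolding l_def using b0 by (simp add: pderiv_lin)
    thus ?thesis unfolding f_def by (simp add: pderiv_add pderiv_power)
  qed
  have partC: "irreducible G"
  proof -
    have Gnu: "\<not> is_unit G" using Gdeg N3 by (simp add: is_unit_iff_degree G0)
    obtain p where pG: "p dvd G" and pirr: "irreducible p" using exists_irr_factor[OF G0 Gnu] by blast
    have p0: "p \<noteq> 0" and pnu: "\<not> is_unit p" using pirr by (auto simp: irreducible_def)
    have pf: "p dvd f" using pG fQG by simp
    have pQ: "\<not> p dvd Q"
    proof
      assume "p dvd Q"
      hence "p * p dvd f" using pG fQG by (metis mult_dvd_mono)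
      then obtain s where "f = p * p * s" by (rule dvdE)
      hence "f = p * (p * s)" by (simp only: mult.assoc)
      hence "pderiv f = pderiv p * (p * s) + p * pderiv (p * s)" by (simp add: pderiv_mult)
      hence "p dvd pderiv f" by (metis dvd_add dvd_mult dvd_triv_left)
      thus False using pderf pnu by simp
    qed
    define d where "d = degree p"
    have d0: "d > 0" using p0 pnu unfolding d_def by (simp add: is_unit_iff_degree)
    have "p dvd [:0,1:]^(2^d) - [:0,1:]" unfolding d_def by (rule irr_frob[OF pirr])
    moreover have "linearized ([:0,1:]^d - 1) = [:0,1:]^(2^d) - [:0,1:]"
      by (simp only: lin_minus lin_Xpow lin_1)
    ultimately have Ak: "p dvd linearized ([:0,1:]^d - 1)" by simp
    have "2 * N dvd d"
      by (rule key[OF irr deg m2 primdvd[unfolded X_def] Nodd b1 pirr pf[unfolded f_def l_def]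
            pQ[unfolded Q_def] Ak])
    hence "2 * N \<le> d" using d0 by (simp add: dvd_imp_le)
    moreover have "d \<le> degree G" unfolding d_def using pG G0 by (rule dvd_imp_degree_le)
    ultimately have dG: "degree p = degree G" using Gdeg unfolding d_def by simp
    obtain u where u: "G = p * u" using pG by (rule dvdE)
    have "u \<noteq> 0" using u G0 by auto
    have "degree G = degree p + degree u" unfolding u using p0 \<open>u \<noteq> 0\<close> by (rule degree_mult_eq)
    hence "degree u = 0" using dG by simp
    hence "is_unit u" using \<open>u \<noteq> 0\<close> by (simp add: is_unit_iff_degree)
    hence "irreducible (u * p)" using pirr by (simp add: irreducible_mult_unit_left)
    thus ?thesis using u by (simp add: mult.commute)
  qed
  show ?thesis
    using partA partB partC Gdeg unfolding f_def G_def Q_def N_def by blast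
qed

end
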